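(* The Kirch space $(\mathbb{N},\tau_K)$ is topologically rigid, i.e. the only homeomorphism $h:\mathbb{N}\to\mathbb{N}$ of the Kirch space onto itself is the identity map.
   Context: $\mathbb{N}=\{1,2,3,\dots\}$ and $\mathbb{N}_0=\{0\}\cup\mathbb{N}$. For $a,b\in\mathbb{N}$ let $a+b\mathbb{N}_0=\{a+bn:n\in\mathbb{N}_0\}$. A number $b$ is square-free if it is not divisible by the square of a prime. The Kirch topology $\tau_K$ on $\mathbb{N}$ is the topology generated by the base consisting of all arithmetic progressions $a+b\mathbb{N}_0$ where $a,b\in\mathbb{N}$ are coprime and $b$ is square-free (equivalently, generated by the subbase of all $a+p\mathbb{N}_0$ with $p$ prime and $a\in\mathbb{N}$ not divisible by $p$). The Kirch space is $(\mathbb{N},\tau_K)$. A topological space is topologically rigid if its homeomorphism group is trivial. *)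

theory Defs
  imports "HOL-Analysis.Analysis" "HOL-Computational_Algebra.Squarefree"
begin

definition arith_prog :: "nat \<Rightarrow> nat \<Rightarrow> nat set" where
  "arith_prog a b = {a + b * n | n. True}"

definition kirch_base :: "nat set set" where
  "kirch_base = {arith_prog a b | a b. a \<ge> 1 \<and> b \<ge> 1 \<and> coprime a b \<and> squarefree b}"

text \<open>The Kirch space: carrier N = {1,2,...} (the union of the base), topology generated by the base.\<close>
definition kirch_topology :: "nat topology" where
  "kirch_topology = topology_generated_by kirch_base"

end

theory Submission
  imports Defs "HOL-Number_Theory.Cong"
begin

abbreviation KT where "KT \<equiv> kirch_topology"

lemma arith_prog_iff: "w \<in> arith_prog x b \<longleftrightarrow> (\<exists>n. w = x + b * n)"
  by (auto simp: arith_prog_def)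

lemma arith_prog_self: "x \<in> arith_prog x b"
  by (auto simp: arith_prog_def intro: exI[of _ 0])

lemma topspace_KT: "topspace KT = {n. 1 \<le> n}"
proof -
  have "\<Union>kirch_base = {n. 1 \<le> n}"
  proof
    show "\<Union>kirch_base \<subseteq> {n. 1 \<le> n}"
      by (auto simp: kirch_base_def arith_prog_def)
    show "{n. 1 \<le> n} \<subseteq> \<Union>kirch_base"
    proof
      fix n :: nat assume "n \<in> {n. 1 \<le> n}"
      hence "arith_prog n 1 \<in> kirch_base" unfolding kirch_base_def by (intro CollectI exI[of _ n] exI[of _ 1]) auto
      thus "n \<in> \<Union>kirch_base" using arith_prog_self by blast
    qed
  qed
  thus ?thesis by (simp add: kirch_topology_def)
qed

lemma arith_prog_sub:
  assumes "w \<in> arith_prog x b" "b' dvd b"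
  shows "arith_prog w b \<subseteq> arith_prog x b'"
proof
  fix v assume "v \<in> arith_prog w b"
  then obtain n where "v = w + b * n" by (auto simp: arith_prog_def)
  moreover obtain m where "w = x + b * m" using assms(1) by (auto simp: arith_prog_def)
  moreover obtain k where "b = b' * k" using assms(2) by (auto elim: dvdE)
  ultimately have "v = x + b' * (k * m + k * n)" by (simp add: algebra_simps)
  thus "v \<in> arith_prog x b'" by (auto simp: arith_prog_def)
qed

lemma coprime_by_primes:
  fixes a b :: nat
  assumes "\<And>p. prime p \<Longrightarrow> p dvd a \<Longrightarrow> p dvd b \<Longrightarrow> False"
  shows "coprime a b"
proof (rule ccontr)
  assume "\<not> coprime a b"
  hence "gcd a b \<noteq> 1" using coprime_iff_gcd_eq_1 by blast
  then obtain p where "prime p" "p dvd gcd a b" using prime_factor_nat by blast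
  hence "p dvd a" "p dvd b" by simp_all
  thus False using assms \<open>prime p\<close> by blast
qed

lemma coprime_primes_iff:
  fixes a b :: nat
  shows "coprime a b \<longleftrightarrow> (\<forall>p. prime p \<longrightarrow> p dvd a \<longrightarrow> \<not> p dvd b)"
proof
  assume cop: "coprime a b"
  show "\<forall>p. prime p \<longrightarrow> p dvd a \<longrightarrow> \<not> p dvd b"
  proof (intro allI impI notI)
    fix p :: nat assume "prime p" "p dvd a" "p dvd b"
    hence "is_unit p" using cop coprime_common_divisor by blast
    thus False using \<open>prime p\<close> by simp
  qed
next
  assume "\<forall>p. prime p \<longrightarrow> p dvd a \<longrightarrow> \<not> p dvd b"
  thus "coprime a b" by (intro coprime_by_primes) auto
qed

lemma arith_prog_coprime:
  assumes "w \<in> arith_prog x b" "coprime x b"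
  shows "coprime w b"
proof -
  obtain m where "w = x + b * m" using assms(1) by (auto simp: arith_prog_def)
  show ?thesis unfolding coprime_primes_iff
  proof (intro allI impI notI)
    fix p :: nat assume p: "prime p" "p dvd w" "p dvd b"
    hence "p dvd x + b * m" using \<open>w = x + b * m\<close> by simp
    moreover have "p dvd b * m" using p(3) by simp
    ultimately have "p dvd x" by (simp add: dvd_add_left_iff)
    thus False using p assms(2) coprime_primes_iff by blast
  qed
qed

lemma squarefree_lcm_nat:
  fixes b1 b2 :: nat
  assumes "squarefree b1" "squarefree b2"
  shows "squarefree (lcm b1 b2)"
proof -
  define g where "g = gcd b1 b2"
  have "b2 \<noteq> 0" using assms(2) by (metis not_squarefree_0)
  hence "g \<noteq> 0" by (simp add: g_def)
  have "g dvd b2" by (simp add: g_def)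
  then obtain c where c: "b2 = g * c" by (rule dvdE)
  have cop: "coprime b1 c"
  proof (rule coprime_by_primes)
    fix p :: nat assume p: "prime p" "p dvd b1" "p dvd c"
    hence "p dvd b2" using c by simp
    hence "p dvd g" using p by (simp add: g_def)
    hence "p * p dvd g * c" using p(3) by (rule mult_dvd_mono)
    hence "p ^ 2 dvd b2" using c by (simp add: power2_eq_square)
    hence "p dvd 1" using assms(2) squarefreeD by blast
    thus False using p(1) by simp
  qed
  have sqc: "squarefree c" using assms(2) unfolding c by (rule squarefree_multD(2))
  have "lcm b1 b2 = b1 * c"
  proof -
    have "b1 * b2 = g * lcm b1 b2" unfolding g_def by (rule prod_gcd_lcm_nat)
    hence "lcm b1 b2 * g = b1 * b2" by (simp add: mult.commute)
    also have "\<dots> = (b1 * c) * g" using c by simp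
    finally show ?thesis using mult_right_cancel[OF \<open>g \<noteq> 0\<close>] by blast
  qed
  thus ?thesis using squarefree_mult_coprime[OF cop assms(1) sqc] by simp
qed

definition kopen :: "nat set \<Rightarrow> bool" where
  "kopen U \<longleftrightarrow> U \<subseteq> {n. 1 \<le> n} \<and>
     (\<forall>x\<in>U. \<exists>b. 1 \<le> b \<and> squarefree b \<and> coprime x b \<and> arith_prog x b \<subseteq> U)"

lemma generate_kopen: "generate_topology_on kirch_base U \<Longrightarrow> kopen U"
proof (induction rule: generate_topology_on.induct)
  case Empty
  then show ?case by (simp add: kopen_def)
next
  case (Int a c)
  show ?case unfolding kopen_def
  proof (intro conjI ballI)
    show "a \<inter> c \<subseteq> {n. 1 \<le> n}" using Int.IH by (auto simp: kopen_def)
    fix x assume x: "x \<in> a \<inter> c"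
    obtain b1 where b1: "1 \<le> b1" "squarefree b1" "coprime x b1" "arith_prog x b1 \<subseteq> a"
      using Int.IH(1) x by (auto simp: kopen_def)
    obtain b2 where b2: "1 \<le> b2" "squarefree b2" "coprime x b2" "arith_prog x b2 \<subseteq> c"
      using Int.IH(2) x by (auto simp: kopen_def)
    define b where "b = lcm b1 b2"
    have "1 \<le> b" using b1 b2 by (simp add: b_def lcm_pos_nat Suc_le_eq)
    moreover have "squarefree b" using b1 b2 squarefree_lcm_nat by (simp add: b_def)
    moreover have "coprime x b" unfolding coprime_primes_iff
    proof (intro allI impI notI)
      fix p :: nat assume p: "prime p" "p dvd x" "p dvd b"
      have "b dvd b1 * b2" by (simp add: b_def)
      hence "p dvd b1 \<or> p dvd b2" using p(1,3) dvd_trans prime_dvd_mult_iff by blast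
      thus False using p b1 b2 coprime_primes_iff by blast
    qed
    moreover have "arith_prog x b \<subseteq> a \<inter> c"
    proof -
      have "arith_prog x b \<subseteq> arith_prog x b1" by (rule arith_prog_sub[OF arith_prog_self]) (simp add: b_def)
      moreover have "arith_prog x b \<subseteq> arith_prog x b2" by (rule arith_prog_sub[OF arith_prog_self]) (simp add: b_def)
      ultimately show ?thesis using b1 b2 by blast
    qed
    ultimately show "\<exists>b. 1 \<le> b \<and> squarefree b \<and> coprime x b \<and> arith_prog x b \<subseteq> a \<inter> c" by blast
  qed
next
  case (UN K)
  show ?case unfolding kopen_def
  proof (intro conjI ballI)
    show "\<Union>K \<subseteq> {n. 1 \<le> n}"
    proof
      fix x assume "x \<in> \<Union>K"
      then obtain k where k: "k \<in> K" "x \<in> k" by blast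
      have "k \<subseteq> {n. 1 \<le> n}" using UN.IH[OF k(1)] unfolding kopen_def by blast
      thus "x \<in> {n. 1 \<le> n}" using k(2) by blast
    qed
    fix x assume "x \<in> \<Union>K"
    then obtain k where k: "k \<in> K" "x \<in> k" by blast
    obtain b where "1 \<le> b" "squarefree b" "coprime x b" "arith_prog x b \<subseteq> k"
      using UN.IH[OF k(1)] k(2) unfolding kopen_def by blast
    thus "\<exists>b. 1 \<le> b \<and> squarefree b \<and> coprime x b \<and> arith_prog x b \<subseteq> \<Union>K"
      using k(1) by blast
  qed
next
  case (Basis s)
  then obtain a b where s: "s = arith_prog a b" "1 \<le> a" "1 \<le> b" "coprime a b" "squarefree b"
    by (auto simp: kirch_base_def)
  show ?case unfolding kopen_def
  proof (intro conjI ballI)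
    show "s \<subseteq> {n. 1 \<le> n}" unfolding s(1) arith_prog_def using s(2) by auto
    fix x assume "x \<in> s"
    hence xs: "x \<in> arith_prog a b" using s(1) by simp
    have "arith_prog x b \<subseteq> s" using arith_prog_sub[OF xs dvd_refl] s(1) by simp
    thus "\<exists>b. 1 \<le> b \<and> squarefree b \<and> coprime x b \<and> arith_prog x b \<subseteq> s"
      using s(3,5) arith_prog_coprime[OF xs s(4)] by blast
  qed
qed

lemma openin_basic:
  assumes "1 \<le> a" "1 \<le> b" "coprime a b" "squarefree b"
  shows "openin KT (arith_prog a b)"
  unfolding kirch_topology_def
  by (rule topology_generated_by_Basis) (use assms in \<open>auto simp: kirch_base_def\<close>)

lemma openin_KT: "openin KT U \<longleftrightarrow> kopen U"
proof
  assume "openin KT U"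
  thus "kopen U" unfolding kirch_topology_def
    by (intro generate_kopen) (simp add: openin_topology_generated_by_iff)
next
  assume k: "kopen U"
  hence "\<forall>x\<in>U. \<exists>b. 1 \<le> b \<and> squarefree b \<and> coprime x b \<and> arith_prog x b \<subseteq> U"
    by (simp add: kopen_def)
  then obtain B where B: "\<forall>x\<in>U. 1 \<le> B x \<and> squarefree (B x) \<and> coprime x (B x) \<and> arith_prog x (B x) \<subseteq> U"
    by (rule bchoice[elim_format]) blast
  have eq: "U = (\<Union>x\<in>U. arith_prog x (B x))" using B arith_prog_self by blast
  have op: "openin KT (arith_prog x (B x))" if "x \<in> U" for x
  proof -
    have "1 \<le> x" using k that by (auto simp: kopen_def)
    thus ?thesis using B that by (intro openin_basic) auto
  qed
  have "openin KT (\<Union>x\<in>U. arith_prog x (B x))"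
    by (rule openin_Union) (use op in blast)
  thus "openin KT U" by (rule ssubst[OF eq])
qed

lemma openin_nbhd:
  assumes "openin KT U" "x \<in> U"
  obtains b where "1 \<le> b" "squarefree b" "coprime x b" "arith_prog x b \<subseteq> U"
  using assms by (auto simp: openin_KT kopen_def)

lemma openin_class:
  assumes "prime q" "\<not> q dvd a"
  shows "openin KT {w. 1 \<le> w \<and> [w = a] (mod q)}"
  unfolding openin_KT kopen_def
proof (intro conjI ballI)
  show "{w. 1 \<le> w \<and> [w = a] (mod q)} \<subseteq> {n. 1 \<le> n}" by auto
  fix x assume x: "x \<in> {w. 1 \<le> w \<and> [w = a] (mod q)}"
  have "[x = a] (mod q)" using x by simp
  hence "\<not> q dvd x" using assms(2) cong_dvd_iff by blast
  hence "coprime x q" using assms(1) by (simp add: coprime_commute prime_imp_coprime)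
  moreover have "arith_prog x q \<subseteq> {w. 1 \<le> w \<and> [w = a] (mod q)}"
  proof
    fix v assume "v \<in> arith_prog x q"
    then obtain n where "v = x + q * n" by (auto simp: arith_prog_def)
    hence "[v = x] (mod q)" by (simp add: cong_def)
    moreover have "[x = a] (mod q)" using x by simp
    ultimately have "[v = a] (mod q)" by (rule cong_trans)
    moreover have "1 \<le> v" using x \<open>v = x + q * n\<close> by simp
    ultimately show "v \<in> {w. 1 \<le> w \<and> [w = a] (mod q)}" by simp
  qed
  moreover have "1 \<le> q" "squarefree q" using assms(1) prime_gt_0_nat squarefree_prime by (auto simp: Suc_le_eq)
  ultimately show "\<exists>b. 1 \<le> b \<and> squarefree b \<and> coprime x b \<and> arith_prog x b \<subseteq> {w. 1 \<le> w \<and> [w = a] (mod q)}"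
    by blast
qed

lemma crt_le:
  fixes a b d e :: nat
  assumes "1 \<le> d" "1 \<le> e" "[a = b] (mod gcd d e)" "a \<le> b"
  shows "\<exists>n m. a + d * n = b + e * m"
proof -
  have "[b = a] (mod gcd d e)" using assms(3) by (rule cong_sym)
  then obtain q where "b = q * gcd d e + a" using cong_le_nat[OF assms(4)] by blast
  hence "gcd d e dvd b - a" by simp
  then obtain x where x: "[d * x = b - a] (mod e)" using cong_solve_dvd_nat by blast
  define x' where "x' = x + e * b"
  have "d * x' = d * x + e * (d * b)" by (simp add: x'_def algebra_simps)
  hence "[d * x' = d * x] (mod e)" by (simp add: cong_def)
  hence c: "[d * x' = b - a] (mod e)" using x by (rule cong_trans)
  have "b - a \<le> d * x'"
  proof -
    have "1 * b \<le> e * b" using assms(2) by (rule mult_le_mono1)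
    hence "b \<le> e * b" by simp
    hence "b - a \<le> e * b" by (rule le_trans[OF diff_le_self])
    also have "\<dots> \<le> x'" by (simp add: x'_def)
    also have "\<dots> \<le> d * x'" using assms(1) by simp
    finally show ?thesis .
  qed
  then obtain m where "d * x' = m * e + (b - a)" using cong_le_nat c by blast
  hence "a + d * x' = b + e * m" using assms(4) by simp
  thus ?thesis by blast
qed

lemma crt_gen:
  fixes a b d e :: nat
  assumes "1 \<le> d" "1 \<le> e" "[a = b] (mod gcd d e)"
  shows "\<exists>n m. a + d * n = b + e * m"
proof (cases "a \<le> b")
  case True
  thus ?thesis using crt_le assms by blast
next
  case False
  have "[b = a] (mod gcd e d)" using assms(3) by (simp add: cong_sym gcd.commute)
  then obtain n m where "b + e * n = a + d * m" using crt_le[of e d b a] assms False by auto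
  thus ?thesis by metis
qed

lemma sqf_cong:
  fixes a b g :: nat
  assumes "squarefree g" "\<And>p. prime p \<Longrightarrow> p dvd g \<Longrightarrow> [a = b] (mod p)"
  shows "[a = b] (mod g)"
proof -
  have g0: "g \<noteq> 0" using assms(1) by (metis not_squarefree_0)
  have main: "[u = v] (mod g)" if uv: "u \<le> v" "\<And>p. prime p \<Longrightarrow> p dvd g \<Longrightarrow> [u = v] (mod p)" for u v
  proof (cases "u = v")
    case True thus ?thesis by simp
  next
    case False
    have "g dvd v - u"
    proof (rule multiplicity_le_imp_dvd[OF g0])
      fix p :: nat assume p: "prime p"
      show "multiplicity p g \<le> multiplicity p (v - u)"
      proof (cases "p dvd g")
        case True
        have "[v = u] (mod p)" using uv(2)[OF p True] by (rule cong_sym)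
        then obtain q where "v = q * p + u" using cong_le_nat[OF uv(1)] by blast
        hence "p dvd v - u" by simp
        moreover have "v - u \<noteq> 0" using False uv(1) by simp
        ultimately have "multiplicity p (v - u) \<ge> 1"
          using p by (simp add: prime_multiplicity_gt_zero_iff Suc_le_eq)
        moreover have "multiplicity p g \<le> 1"
          using assms(1) g0 p squarefree_factorial_semiring'' by blast
        ultimately show ?thesis by simp
      next
        case False
        thus ?thesis by (simp add: not_dvd_imp_multiplicity_0)
      qed
    qed
    thus ?thesis using uv(1) by (metis cong_le_nat cong_sym dvd_div_mult_self le_add_diff_inverse2 add.commute)
  qed
  show ?thesis
  proof (cases "a \<le> b")
    case True thus ?thesis using main assms(2) by blast
  next
    case False
    hence "[b = a] (mod g)" using main[of b a] assms(2) by (simp add: cong_sym)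
    thus ?thesis by (rule cong_sym)
  qed
qed

lemma clo_upper:
  assumes "prime q" "S \<subseteq> {w. [w = x] (mod q)}"
  shows "KT closure_of S \<subseteq> {w. 1 \<le> w \<and> (q dvd w \<or> [w = x] (mod q))}"
proof
  fix w assume w: "w \<in> KT closure_of S"
  hence w1: "1 \<le> w" using closure_of_subset_topspace topspace_KT by fastforce
  show "w \<in> {w. 1 \<le> w \<and> (q dvd w \<or> [w = x] (mod q))}"
  proof (cases "q dvd w")
    case True thus ?thesis using w1 by simp
  next
    case False
    have "openin KT (arith_prog w q)"
      using w1 assms(1) False prime_gt_0_nat[OF assms(1)] by (intro openin_basic) (auto simp: Suc_le_eq squarefree_prime prime_imp_coprime coprime_commute)
    then obtain y where y: "y \<in> S" "y \<in> arith_prog w q"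
      using w arith_prog_self unfolding in_closure_of by blast
    obtain n where "y = w + q * n" using y(2) by (auto simp: arith_prog_def)
    hence "[w = y] (mod q)" by (simp add: cong_def)
    moreover have "[y = x] (mod q)" using y(1) assms(2) by blast
    ultimately have "[w = x] (mod q)" by (rule cong_trans)
    thus ?thesis using w1 by simp
  qed
qed

lemma clo_lower:
  assumes "squarefree d" "1 \<le> d" "1 \<le> w"
    "\<And>r. prime r \<Longrightarrow> r dvd d \<Longrightarrow> r dvd w \<or> [w = z] (mod r)"
  shows "w \<in> KT closure_of (arith_prog z d)"
proof -
  have "\<forall>T. w \<in> T \<and> openin KT T \<longrightarrow> (\<exists>y. y \<in> arith_prog z d \<and> y \<in> T)"
  proof (intro allI impI)
  fix T assume T: "w \<in> T \<and> openin KT T"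
  then obtain e where e: "1 \<le> e" "squarefree e" "coprime w e" "arith_prog w e \<subseteq> T"
    using openin_nbhd by metis
  have "[z = w] (mod gcd d e)"
  proof (rule sqf_cong)
    show "squarefree (gcd d e)" using assms(1) squarefree_mono by (metis gcd_dvd1)
    fix r :: nat assume r: "prime r" "r dvd gcd d e"
    hence "\<not> r dvd w" using e(3) coprime_primes_iff by (metis gcd_dvd2 dvd_trans)
    thus "[z = w] (mod r)" using assms(4)[OF r(1)] r(2) by (metis cong_sym gcd_dvd1 dvd_trans)
  qed
  then obtain n m where nm: "z + d * n = w + e * m" using crt_gen assms(2) e(1) by blast
  have "z + d * n \<in> arith_prog z d" by (auto simp: arith_prog_def)
  moreover have "w + e * m \<in> arith_prog w e" by (auto simp: arith_prog_def)
  hence "z + d * n \<in> T" using e(4) nm by auto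
  ultimately show "\<exists>y. y \<in> arith_prog z d \<and> y \<in> T" by blast
  qed
  thus ?thesis using assms(3) by (simp add: in_closure_of topspace_KT)
qed

lemma mkw:
  fixes q b c t x y :: nat
  assumes "prime q" "1 \<le> b" "1 \<le> c" "\<not> q dvd t"
    "q dvd b \<Longrightarrow> [t = x] (mod q)" "q dvd c \<Longrightarrow> [t = y] (mod q)"
  shows "\<exists>w. 1 \<le> w \<and> [w = t] (mod q) \<and>
     (\<forall>r. prime r \<longrightarrow> r dvd b \<longrightarrow> r dvd w \<or> [w = x] (mod r)) \<and>
     (\<forall>r. prime r \<longrightarrow> r dvd c \<longrightarrow> r dvd w \<or> [w = y] (mod r))"
proof -
  define A where "A = prime_factors (b * c) - {q}"
  define m where "m = \<Prod>A"
  have finA: "finite A" by (simp add: A_def)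
  have cA: "coprime i q" if "i \<in> A" for i
  proof -
    have "prime i" "i \<noteq> q" using that by (auto simp: A_def in_prime_factors_iff)
    thus ?thesis using assms(1) by (simp add: primes_coprime)
  qed
  have "coprime m q" unfolding m_def by (rule prod_coprime_left) (simp add: cA)
  then obtain s where s: "[m * s = Suc 0] (mod q)" using cong_solve_coprime_nat by blast
  define w where "w = m * s * t"
  have wt: "[w = t] (mod q)"
  proof -
    have "[m * s * t = Suc 0 * t] (mod q)" using s by (rule cong_mult) simp
    thus ?thesis by (simp add: w_def)
  qed
  have "w \<noteq> 0"
  proof
    assume "w = 0"
    hence "[0 = t] (mod q)" using wt by simp
    hence "q dvd t" using cong_dvd_iff[of 0 t q] by simp
    thus False using assms(4) by simp
  qed
  have dv: "r dvd w" if "prime r" "r dvd b * c" "r \<noteq> q" for r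
  proof -
    have "r \<in> A" using that assms(2,3) by (auto simp: A_def in_prime_factors_iff)
    hence "r dvd m" unfolding m_def using finA by (metis dvd_prodI id_apply)
    thus ?thesis by (simp add: w_def)
  qed
  have "\<forall>r. prime r \<longrightarrow> r dvd b \<longrightarrow> r dvd w \<or> [w = x] (mod r)"
  proof (intro allI impI)
    fix r :: nat assume r: "prime r" "r dvd b"
    show "r dvd w \<or> [w = x] (mod r)"
    proof (cases "r = q")
      case True
      hence "[t = x] (mod q)" using assms(5) r(2) by simp
      hence "[w = x] (mod q)" using wt cong_trans by blast
      thus ?thesis using True by simp
    next
      case False thus ?thesis using dv r by simp
    qed
  qed
  moreover have "\<forall>r. prime r \<longrightarrow> r dvd c \<longrightarrow> r dvd w \<or> [w = y] (mod r)"
  proof (intro allI impI)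
    fix r :: nat assume r: "prime r" "r dvd c"
    show "r dvd w \<or> [w = y] (mod r)"
    proof (cases "r = q")
      case True
      hence "[t = y] (mod q)" using assms(6) r(2) by simp
      hence "[w = y] (mod q)" using wt cong_trans by blast
      thus ?thesis using True by simp
    next
      case False thus ?thesis using dv r by simp
    qed
  qed
  ultimately show ?thesis using wt \<open>w \<noteq> 0\<close> by (intro exI[of _ w]) auto
qed

definition PN :: "nat \<Rightarrow> nat set" where "PN p = {n. 1 \<le> n \<and> p dvd n}"

lemma sep:
  assumes p: "prime p" and U: "openin KT U" and V: "openin KT V" and xy: "x \<in> U" "y \<in> V"
    and sub: "KT closure_of U \<inter> KT closure_of V \<subseteq> PN p"
  shows "\<not> p dvd x \<and> \<not> [x = y] (mod p)"
proof -
  obtain b where b: "1 \<le> b" "squarefree b" "coprime x b" "arith_prog x b \<subseteq> U"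
    using openin_nbhd[OF U xy(1)] by metis
  obtain c where c: "1 \<le> c" "squarefree c" "coprime y c" "arith_prog y c \<subseteq> V"
    using openin_nbhd[OF V xy(2)] by metis
  have key: "p dvd b \<and> p dvd c \<and> \<not> [x = y] (mod p)"
  proof (rule ccontr)
    assume H: "\<not> (p dvd b \<and> p dvd c \<and> \<not> [x = y] (mod p))"
    define t where "t = (if p dvd b then x else if p dvd c then y else 1)"
    have nt: "\<not> p dvd t"
      using b(3) c(3) p coprime_primes_iff unfolding t_def by (auto simp: prime_gt_1_nat)
    have t1: "p dvd b \<Longrightarrow> [t = x] (mod p)" by (simp add: t_def)
    have t2: "p dvd c \<Longrightarrow> [t = y] (mod p)" using H by (auto simp: t_def)
    obtain w where w: "1 \<le> w" "[w = t] (mod p)"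
      "\<forall>r. prime r \<longrightarrow> r dvd b \<longrightarrow> r dvd w \<or> [w = x] (mod r)"
      "\<forall>r. prime r \<longrightarrow> r dvd c \<longrightarrow> r dvd w \<or> [w = y] (mod r)"
      using mkw[OF p b(1) c(1) nt t1 t2] by blast
    have "w \<in> KT closure_of (arith_prog x b)" using clo_lower[OF b(2) b(1) w(1)] w(3) by blast
    hence "w \<in> KT closure_of U" using closure_of_mono[OF b(4)] by blast
    moreover have "w \<in> KT closure_of (arith_prog y c)" using clo_lower[OF c(2) c(1) w(1)] w(4) by blast
    hence "w \<in> KT closure_of V" using closure_of_mono[OF c(4)] by blast
    ultimately have "p dvd w" using sub by (auto simp: PN_def)
    hence "p dvd t" using w(2) by (simp add: cong_dvd_iff)
    thus False using nt by simp
  qed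
  thus ?thesis using b(3) p coprime_primes_iff by blast
qed

definition Th :: "nat \<Rightarrow> nat \<Rightarrow> nat \<Rightarrow> bool" where
  "Th x y z \<longleftrightarrow> (\<forall>W. openin KT W \<and> z \<in> W \<longrightarrow>
     (\<exists>U V. openin KT U \<and> openin KT V \<and> x \<in> U \<and> y \<in> V \<and>
        KT closure_of U \<inter> KT closure_of V \<subseteq> KT closure_of W))"

definition Zs :: "nat \<Rightarrow> nat \<Rightarrow> nat set" where
  "Zs x y = {z. 1 \<le> z \<and> (\<forall>q. prime q \<and> odd q \<and> (q dvd x \<or> q dvd y \<or> [x = y] (mod q)) \<longrightarrow>
      (q dvd z \<or> [z = x] (mod q) \<or> [z = y] (mod q)))}"

lemma Zs_contra:
  assumes "z \<in> Zs x y" "prime q" "odd q" "\<not> q dvd z" "\<not> [z = x] (mod q)" "\<not> [z = y] (mod q)"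
  shows "\<not> q dvd x \<and> \<not> q dvd y \<and> \<not> [x = y] (mod q)"
  using assms unfolding Zs_def by blast

lemma Th_imp_Zs:
  assumes "1 \<le> x" "1 \<le> y" "1 \<le> z" "Th x y z"
  shows "z \<in> Zs x y"
proof -
  have "q dvd z \<or> [z = x] (mod q) \<or> [z = y] (mod q)"
    if q: "prime q" "odd q" "q dvd x \<or> q dvd y \<or> [x = y] (mod q)" for q
  proof (rule ccontr)
    assume H: "\<not> (q dvd z \<or> [z = x] (mod q) \<or> [z = y] (mod q))"
    define W where "W = {w. 1 \<le> w \<and> [w = z] (mod q)}"
    have W: "openin KT W" "z \<in> W" using openin_class[OF q(1)] H assms(3) by (auto simp: W_def)
    obtain U V where UV: "openin KT U" "openin KT V" "x \<in> U" "y \<in> V"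
      "KT closure_of U \<inter> KT closure_of V \<subseteq> KT closure_of W"
      using assms(4) W unfolding Th_def by blast
    have clW: "KT closure_of W \<subseteq> {w. 1 \<le> w \<and> (q dvd w \<or> [w = z] (mod q))}"
      by (rule clo_upper[OF q(1)]) (auto simp: W_def)
    obtain b where b: "1 \<le> b" "squarefree b" "coprime x b" "arith_prog x b \<subseteq> U"
      using openin_nbhd[OF UV(1,3)] by metis
    obtain c where c: "1 \<le> c" "squarefree c" "coprime y c" "arith_prog y c \<subseteq> V"
      using openin_nbhd[OF UV(2,4)] by metis
    have "q \<noteq> 2" using q(2) by auto
    hence q3: "3 \<le> q" using prime_ge_2_nat[OF q(1)] by linarith
    define t0 :: nat where "t0 = (if [1 = z] (mod q) then 2 else 1)"
    have t0: "\<not> q dvd t0" "\<not> [t0 = z] (mod q)"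
    proof -
      show "\<not> q dvd t0"
      proof
        assume "q dvd t0"
        hence "q \<le> t0" using t0_def by (auto dest: dvd_imp_le)
        thus False using q3 t0_def by (auto split: if_splits)
      qed
      show "\<not> [t0 = z] (mod q)"
      proof
        assume a: "[t0 = z] (mod q)"
        show False
        proof (cases "[1 = z] (mod q)")
          case True
          have "[2 = z] (mod q)" using a True by (simp add: t0_def)
          moreover have "[z = 1] (mod q)" using True by (rule cong_sym)
          ultimately have "[2 = 1] (mod q)" by (rule cong_trans)
          thus False using q3 by (auto simp: cong_def)
        next
          case False
          thus False using a t0_def by simp
        qed
      qed
    qed
    define t where "t = (if q dvd b then x else if q dvd c then y else t0)"
    have qbx: "q dvd b \<Longrightarrow> \<not> q dvd x" using b(3) q(1) coprime_primes_iff by blast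
    have qcy: "q dvd c \<Longrightarrow> \<not> q dvd y" using c(3) q(1) coprime_primes_iff by blast
    have nt: "\<not> q dvd t" using qbx qcy t0 by (simp add: t_def)
    have ntz: "\<not> [t = z] (mod q)" using H t0 by (auto simp: t_def cong_sym_eq)
    have t1: "q dvd b \<Longrightarrow> [t = x] (mod q)" by (simp add: t_def)
    have t2: "q dvd c \<Longrightarrow> [t = y] (mod q)"
    proof -
      assume qc: "q dvd c"
      show "[t = y] (mod q)"
      proof (cases "q dvd b")
        case True
        hence "[x = y] (mod q)" using q(3) qbx qcy qc by blast
        thus ?thesis using True by (simp add: t_def)
      next
        case False thus ?thesis using qc by (simp add: t_def)
      qed
    qed
    obtain w where w: "1 \<le> w" "[w = t] (mod q)"
      "\<forall>r. prime r \<longrightarrow> r dvd b \<longrightarrow> r dvd w \<or> [w = x] (mod r)"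
      "\<forall>r. prime r \<longrightarrow> r dvd c \<longrightarrow> r dvd w \<or> [w = y] (mod r)"
      using mkw[OF q(1) b(1) c(1) nt t1 t2] by blast
    have "w \<in> KT closure_of (arith_prog x b)" using clo_lower[OF b(2) b(1) w(1)] w(3) by blast
    hence "w \<in> KT closure_of U" using closure_of_mono[OF b(4)] by blast
    moreover have "w \<in> KT closure_of (arith_prog y c)" using clo_lower[OF c(2) c(1) w(1)] w(4) by blast
    hence "w \<in> KT closure_of V" using closure_of_mono[OF c(4)] by blast
    ultimately have "w \<in> KT closure_of W" using UV(5) by blast
    hence "q dvd w \<or> [w = z] (mod q)" using clW by blast
    moreover have "\<not> q dvd w" using w(2) nt cong_dvd_iff by blast
    moreover have "\<not> [w = z] (mod q)"
    proof
      assume "[w = z] (mod q)"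
      with cong_sym[OF w(2)] have "[t = z] (mod q)" by (rule cong_trans)
      thus False using ntz by simp
    qed
    ultimately show False by blast
  qed
  thus ?thesis using assms(3) unfolding Zs_def by blast
qed

lemma prime_odd_ge3: "prime (q::nat) \<Longrightarrow> odd q \<Longrightarrow> 3 \<le> q"
proof -
  assume q: "prime q" "odd q"
  have "q \<noteq> 2" using q(2) by auto
  thus "3 \<le> q" using prime_ge_2_nat[OF q(1)] by linarith
qed

lemma cong_st: "[w = x] (mod r) \<Longrightarrow> [z = x] (mod r) \<Longrightarrow> [w = z] (mod r)"
  for w x z r :: nat
  by (rule cong_trans[OF _ cong_sym])

lemma Zs_imp_Th:
  assumes "1 \<le> x" "1 \<le> y" "z \<in> Zs x y"
  shows "Th x y z"
  unfolding Th_def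
proof (intro allI impI)
  fix W assume W: "openin KT W \<and> z \<in> W"
  obtain d where d: "1 \<le> d" "squarefree d" "coprime z d" "arith_prog z d \<subseteq> W"
    using openin_nbhd W by metis
  have z1: "1 \<le> z" using assms(3) by (simp add: Zs_def)
  define B where "B = {q. prime q \<and> odd q \<and> q dvd d \<and> ([z = x] (mod q) \<or> \<not> [z = y] (mod q))}"
  define C where "C = {q. prime q \<and> odd q \<and> q dvd d \<and> \<not> [z = x] (mod q)}"
  have finB: "finite B"
  proof (rule finite_subset[of _ "{..d}"])
    show "B \<subseteq> {..d}" using d(1) by (auto simp: B_def dest: dvd_imp_le)
  qed simp
  have finC: "finite C"
  proof (rule finite_subset[of _ "{..d}"])
    show "C \<subseteq> {..d}" using d(1) by (auto simp: C_def dest: dvd_imp_le)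
  qed simp
  have qz: "\<not> q dvd z" if "prime q" "q dvd d" for q
    using d(3) that coprime_primes_iff by blast
  have Bx: "\<not> q dvd x" if "q \<in> B" for q
  proof -
    have q: "prime q" "odd q" "q dvd d" using that by (auto simp: B_def)
    show ?thesis
    proof (cases "[z = x] (mod q)")
      case True
      thus ?thesis using qz[OF q(1,3)] cong_dvd_iff by blast
    next
      case False
      hence "\<not> [z = y] (mod q)" using that by (auto simp: B_def)
      thus ?thesis using Zs_contra[OF assms(3) q(1,2) qz[OF q(1,3)] False] by blast
    qed
  qed
  have Cy: "\<not> q dvd y" if "q \<in> C" for q
  proof -
    have q: "prime q" "odd q" "q dvd d" "\<not> [z = x] (mod q)" using that by (auto simp: C_def)
    show ?thesis
    proof (cases "[z = y] (mod q)")
      case True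
      thus ?thesis using qz[OF q(1,3)] cong_dvd_iff by blast
    next
      case False
      thus ?thesis using Zs_contra[OF assms(3) q(1,2) qz[OF q(1,3)] q(4) False] by blast
    qed
  qed
  define U where "U = (\<Inter>q\<in>B. {w. 1 \<le> w \<and> [w = x] (mod q)}) \<inter> topspace KT"
  define V where "V = (\<Inter>q\<in>C. {w. 1 \<le> w \<and> [w = y] (mod q)}) \<inter> topspace KT"
  have oU: "openin KT U" unfolding U_def
    by (rule openin_INT[OF finB]) (use Bx openin_class in \<open>auto simp: B_def\<close>)
  have oV: "openin KT V" unfolding V_def
    by (rule openin_INT[OF finC]) (use Cy openin_class in \<open>auto simp: C_def\<close>)
  have xU: "x \<in> U" using assms(1) by (simp add: U_def topspace_KT)
  have yV: "y \<in> V" using assms(2) by (simp add: V_def topspace_KT)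
  have clU: "q dvd w \<or> [w = x] (mod q)" if "w \<in> KT closure_of U" "q \<in> B" for w q
  proof -
    have "KT closure_of U \<subseteq> {w. 1 \<le> w \<and> (q dvd w \<or> [w = x] (mod q))}"
      by (rule clo_upper) (use that(2) in \<open>auto simp: U_def B_def\<close>)
    thus ?thesis using that(1) by blast
  qed
  have clV: "q dvd w \<or> [w = y] (mod q)" if "w \<in> KT closure_of V" "q \<in> C" for w q
  proof -
    have "KT closure_of V \<subseteq> {w. 1 \<le> w \<and> (q dvd w \<or> [w = y] (mod q))}"
      by (rule clo_upper) (use that(2) in \<open>auto simp: V_def C_def\<close>)
    thus ?thesis using that(1) by blast
  qed
  have "KT closure_of U \<inter> KT closure_of V \<subseteq> KT closure_of W"
  proof
    fix w assume w: "w \<in> KT closure_of U \<inter> KT closure_of V"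
    have "w \<in> topspace KT" using w closure_of_subset_topspace[of KT U] by blast
    hence w1: "1 \<le> w" by (simp add: topspace_KT)
    have "w \<in> KT closure_of (arith_prog z d)"
    proof (rule clo_lower[OF d(2) d(1) w1])
      fix r :: nat assume r: "prime r" "r dvd d"
      show "r dvd w \<or> [w = z] (mod r)"
      proof (cases "odd r")
        case False
        hence "2 dvd r" by simp
        hence "r = 2" using primes_dvd_imp_eq[OF two_is_prime_nat r(1)] by simp
        hence "odd z" using qz[OF r] by auto
        show ?thesis
        proof (cases "even w")
          case True thus ?thesis using \<open>r = 2\<close> by simp
        next
          case False
          hence "w mod 2 = z mod 2" using \<open>odd z\<close> by (simp add: odd_iff_mod_2_eq_one)
          thus ?thesis using \<open>r = 2\<close> by (simp add: cong_def)
        qed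
      next
        case True
        show ?thesis
        proof (cases "[z = x] (mod r)")
          case zx: True
          hence "r \<in> B" using r True by (simp add: B_def)
          hence "r dvd w \<or> [w = x] (mod r)" using clU w by blast
          thus ?thesis using cong_st[OF _ zx] by blast
        next
          case zx: False
          hence rC: "r \<in> C" using r True by (simp add: C_def)
          show ?thesis
          proof (cases "[z = y] (mod r)")
            case zy: True
            hence "r dvd w \<or> [w = y] (mod r)" using clV w rC by blast
            thus ?thesis using cong_st[OF _ zy] by blast
          next
            case zy: False
            hence rB: "r \<in> B" using r True by (simp add: B_def)
            have nxy: "\<not> [x = y] (mod r)" using Zs_contra[OF assms(3) r(1) True qz[OF r] zx zy] by blast
            have "r dvd w \<or> [w = x] (mod r)" using clU w rB by blast
            moreover have "r dvd w \<or> [w = y] (mod r)" using clV w rC by blast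
            moreover have "\<not> ([w = x] (mod r) \<and> [w = y] (mod r))"
            proof
              assume a: "[w = x] (mod r) \<and> [w = y] (mod r)"
              have "[x = y] (mod r)" using cong_trans[OF cong_sym[OF conjunct1[OF a]] conjunct2[OF a]] .
              thus False using nxy by simp
            qed
            ultimately show ?thesis by blast
          qed
        qed
      qed
    qed
    thus "w \<in> KT closure_of W" using closure_of_mono[OF d(4)] by blast
  qed
  thus "\<exists>U V. openin KT U \<and> openin KT V \<and> x \<in> U \<and> y \<in> V \<and>
        KT closure_of U \<inter> KT closure_of V \<subseteq> KT closure_of W"
    using oU oV xU yV by blast
qed

lemma Th_iff:
  assumes "1 \<le> x" "1 \<le> y" "1 \<le> z"
  shows "Th x y z \<longleftrightarrow> z \<in> Zs x y"
  using Th_imp_Zs Zs_imp_Th assms by blast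

definition ND :: "nat set \<Rightarrow> bool" where
  "ND F \<longleftrightarrow> \<not> (\<exists>Og. openin KT Og \<and> Og \<noteq> {} \<and> Og \<subseteq> F)"

lemma Zs_PN:
  assumes p: "prime p" "odd p"
  shows "Zs p (2 * p) = PN p"
proof
  show "Zs p (2 * p) \<subseteq> PN p"
  proof
    fix z assume z: "z \<in> Zs p (2 * p)"
    hence z1: "1 \<le> z" by (simp add: Zs_def)
    have "\<forall>q. prime q \<and> odd q \<and> (q dvd p \<or> q dvd 2 * p \<or> [p = 2 * p] (mod q)) \<longrightarrow>
      (q dvd z \<or> [z = p] (mod q) \<or> [z = 2 * p] (mod q))" using z unfolding Zs_def by blast
    hence "prime p \<and> odd p \<and> (p dvd p \<or> p dvd 2 * p \<or> [p = 2 * p] (mod p)) \<longrightarrow>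
      (p dvd z \<or> [z = p] (mod p) \<or> [z = 2 * p] (mod p))" by (rule spec)
    hence "p dvd z \<or> [z = p] (mod p) \<or> [z = 2 * p] (mod p)" using p by simp
    moreover have "[z = p] (mod p) \<Longrightarrow> p dvd z" using cong_dvd_iff[of z p p] by simp
    moreover have "[z = 2 * p] (mod p) \<Longrightarrow> p dvd z" using cong_dvd_iff[of z "2 * p" p] by simp
    ultimately show "z \<in> PN p" using z1 by (auto simp: PN_def)
  qed
next
  show "PN p \<subseteq> Zs p (2 * p)"
  proof
    fix z assume z: "z \<in> PN p"
    have "q dvd z" if q: "prime q" "odd q" "q dvd p \<or> q dvd 2 * p \<or> [p = 2 * p] (mod q)" for q
    proof -
      have "q dvd p"
      proof -
        { assume "q dvd 2 * p"
          hence "q dvd 2 \<or> q dvd p" using q(1) prime_dvd_mult_iff by blast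
          moreover have "\<not> q dvd 2"
          proof
            assume "q dvd 2"
            hence "q = 2" using primes_dvd_imp_eq[OF q(1) two_is_prime_nat] by simp
            thus False using q(2) by simp
          qed
          ultimately have "q dvd p" by blast }
        moreover
        { assume "[p = 2 * p] (mod q)"
          hence "[2 * p = p] (mod q)" by (rule cong_sym)
          then obtain k where "2 * p = k * q + p" using cong_le_nat[of p "2 * p" q] by auto
          hence "p = k * q" by simp
          hence "q dvd p" by simp }
        ultimately show ?thesis using q(3) by blast
      qed
      hence "q = p" using primes_dvd_imp_eq[OF q(1) p(1)] by simp
      thus ?thesis using z by (simp add: PN_def)
    qed
    moreover have "1 \<le> z" using z by (simp add: PN_def)
    ultimately show "z \<in> Zs p (2 * p)" unfolding Zs_def by blast
  qed
qed

lemma cong_ne_le: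
  fixes x y q :: nat
  assumes "[x = y] (mod q)" "x \<noteq> y"
  shows "q \<le> x + y"
proof (cases "x < y")
  case True
  have "[y = x] (mod q)" using assms(1) by (rule cong_sym)
  then obtain k where k: "y = k * q + x" using cong_le_nat[of x y q] True by auto
  hence "k \<noteq> 0" using assms(2) by auto
  hence "1 * q \<le> k * q" by (intro mult_le_mono1) simp
  thus ?thesis using k by linarith
next
  case False
  hence "y < x" using assms(2) by simp
  then obtain k where k: "x = k * q + y" using cong_le_nat[of y x q] assms(1) by auto
  hence "k \<noteq> 0" using assms(2) by auto
  hence "1 * q \<le> k * q" by (intro mult_le_mono1) simp
  thus ?thesis using k by linarith
qed

lemma Zs_open:
  assumes xy: "1 \<le> x" "1 \<le> y" "x \<noteq> y"
    and nc: "\<And>q. prime q \<Longrightarrow> odd q \<Longrightarrow> q dvd x \<Longrightarrow> q dvd y \<Longrightarrow> False"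
  shows "\<not> ND (Zs x y)"
proof -
  define S where "S = {q. prime q \<and> odd q \<and> (q dvd x \<or> q dvd y \<or> [x = y] (mod q))}"
  have finS: "finite S"
  proof (rule finite_subset[of _ "{..x + y}"])
    show "S \<subseteq> {..x + y}"
    proof
      fix q assume q: "q \<in> S"
      have "q \<le> x + y"
      proof -
        { assume "q dvd x" hence "q \<le> x" using xy(1) by (simp add: dvd_imp_le) }
        moreover
        { assume "q dvd y" hence "q \<le> y" using xy(2) by (simp add: dvd_imp_le) }
        moreover
        { assume "[x = y] (mod q)" hence "q \<le> x + y" using cong_ne_le xy(3) by blast }
        ultimately show ?thesis using q by (auto simp: S_def)
      qed
      thus "q \<in> {..x + y}" by simp
    qed
  qed simp
  define r where "r q = (if q dvd x then y else x)" for q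
  have nr: "\<not> q dvd r q" if "q \<in> S" for q
    using that nc by (auto simp: S_def r_def)
  have cop: "\<forall>i\<in>S. \<forall>j\<in>S. i \<noteq> j \<longrightarrow> coprime i j"
    by (auto simp: S_def primes_coprime)
  obtain z0 where z0: "\<forall>q\<in>S. [z0 = r q] (mod q)"
    using chinese_remainder_nat[OF finS, of "\<lambda>q. q" r] cop by auto
  define P where "P = \<Prod>S"
  have "0 < P" unfolding P_def
    by (rule prod_pos) (auto simp: S_def prime_gt_0_nat)
  hence P1: "1 \<le> P" by simp
  define z1 where "z1 = z0 + P"
  have z1c: "[z1 = r q] (mod q)" if "q \<in> S" for q
  proof -
    have "q dvd P" unfolding P_def using dvd_prodI[OF finS that, of "\<lambda>x. x"] by simp
    then obtain k where "P = q * k" by (rule dvdE)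
    hence "[z0 + P = z0] (mod q)" by (simp add: cong_def)
    moreover have "[z0 = r q] (mod q)" using z0 that by blast
    ultimately show ?thesis unfolding z1_def by (rule cong_trans)
  qed
  define Og where "Og = (\<Inter>q\<in>S. {w. 1 \<le> w \<and> [w = r q] (mod q)}) \<inter> topspace KT"
  have oO: "openin KT Og" unfolding Og_def
    by (rule openin_INT[OF finS]) (use nr openin_class in \<open>auto simp: S_def\<close>)
  have "z1 \<in> Og" using z1c P1 by (auto simp: Og_def z1_def topspace_KT)
  hence nO: "Og \<noteq> {}" by blast
  have "Og \<subseteq> Zs x y"
  proof
    fix w assume w: "w \<in> Og"
    have w1: "1 \<le> w" using w by (simp add: Og_def topspace_KT)
    have "q dvd w \<or> [w = x] (mod q) \<or> [w = y] (mod q)"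
      if q: "prime q" "odd q" "q dvd x \<or> q dvd y \<or> [x = y] (mod q)" for q
    proof -
      have "q \<in> S" using q by (simp add: S_def)
      hence "[w = r q] (mod q)" using w by (auto simp: Og_def)
      thus ?thesis by (cases "q dvd x") (auto simp: r_def)
    qed
    thus "w \<in> Zs x y" using w1 unfolding Zs_def by blast
  qed
  thus ?thesis unfolding ND_def using oO nO by blast
qed

lemma Zs_ND_sub:
  assumes xy: "1 \<le> x" "1 \<le> y" "x \<noteq> y" and nd: "ND (Zs x y)"
  shows "\<exists>q. prime q \<and> odd q \<and> Zs x y \<subseteq> PN q"
proof -
  obtain q where q: "prime q" "odd q" "q dvd x" "q dvd y"
    using Zs_open[OF xy] nd by blast
  have "Zs x y \<subseteq> PN q"
  proof
    fix z assume z: "z \<in> Zs x y"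
    hence "q dvd z \<or> [z = x] (mod q) \<or> [z = y] (mod q)" using q unfolding Zs_def by blast
    moreover have "[z = x] (mod q) \<Longrightarrow> q dvd z" using cong_dvd_iff[of z x q] q(3) by simp
    moreover have "[z = y] (mod q) \<Longrightarrow> q dvd z" using cong_dvd_iff[of z y q] q(4) by simp
    ultimately show "z \<in> PN q" using z by (auto simp: Zs_def PN_def)
  qed
  thus ?thesis using q by blast
qed

lemma ND_PN:
  assumes "prime p"
  shows "ND (PN p)"
  unfolding ND_def
proof
  assume "\<exists>Og. openin KT Og \<and> Og \<noteq> {} \<and> Og \<subseteq> PN p"
  then obtain Og w where Og: "openin KT Og" "Og \<subseteq> PN p" "w \<in> Og" by blast
  obtain b where b: "1 \<le> b" "squarefree b" "coprime w b" "arith_prog w b \<subseteq> Og"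
    using openin_nbhd[OF Og(1) Og(3)] by metis
  have "w + b * 1 \<in> arith_prog w b" by (auto simp: arith_prog_def)
  hence "w + b \<in> PN p" using b(4) Og(2) by auto
  hence "p dvd w + b" by (simp add: PN_def)
  moreover have "p dvd w" using Og by (auto simp: PN_def)
  ultimately have "p dvd b" by (simp add: dvd_add_right_iff)
  thus False using \<open>p dvd w\<close> b(3) assms coprime_primes_iff by blast
qed

lemma hm_ts:
  assumes "homeomorphic_map KT KT f" "x \<in> topspace KT"
  shows "f x \<in> topspace KT"
  using homeomorphic_imp_surjective_map[OF assms(1)] assms(2) by blast

lemma hm_open:
  assumes "homeomorphic_map KT KT f" "openin KT U"
  shows "openin KT (f ` U)"
  using homeomorphic_imp_open_map[OF assms(1)] assms(2) unfolding open_map_def by blast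

lemma hm_img_int:
  assumes "homeomorphic_map KT KT f" "A \<subseteq> topspace KT" "B \<subseteq> topspace KT"
  shows "f ` A \<inter> f ` B = f ` (A \<inter> B)"
proof -
  have "inj_on f (topspace KT)" using homeomorphic_imp_injective_map[OF assms(1)] .
  moreover have "A \<union> B \<subseteq> topspace KT" using assms(2,3) by blast
  ultimately have "inj_on f (A \<union> B)" by (rule inj_on_subset)
  thus ?thesis by (rule inj_on_image_Int[symmetric]) auto
qed

lemma hm_cl_int:
  assumes hf: "homeomorphic_map KT KT f" and U: "openin KT U" and V: "openin KT V"
    and sub: "KT closure_of U \<inter> KT closure_of V \<subseteq> F"
  shows "KT closure_of (f ` U) \<inter> KT closure_of (f ` V) \<subseteq> f ` F"
proof -
  have "KT closure_of (f ` U) = f ` (KT closure_of U)"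
    using homeomorphic_map_closure_of[OF hf openin_subset[OF U]] .
  moreover have "KT closure_of (f ` V) = f ` (KT closure_of V)"
    using homeomorphic_map_closure_of[OF hf openin_subset[OF V]] .
  moreover have "f ` (KT closure_of U) \<inter> f ` (KT closure_of V) = f ` (KT closure_of U \<inter> KT closure_of V)"
    by (rule hm_img_int[OF hf closure_of_subset_topspace closure_of_subset_topspace])
  ultimately show ?thesis using sub by auto
qed

lemma Th_pres:
  assumes hf: "homeomorphic_map KT KT f" and Th: "Th x y z" and zts: "z \<in> topspace KT"
  shows "Th (f x) (f y) (f z)"
  unfolding Th_def
proof (intro allI impI)
  fix W' assume W': "openin KT W' \<and> f z \<in> W'"
  define W where "W = {w \<in> topspace KT. f w \<in> W'}"
  have oW: "openin KT W" unfolding W_def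
    using openin_continuous_map_preimage[OF homeomorphic_imp_continuous_map[OF hf]] W' by blast
  have zW: "z \<in> W" using zts W' by (simp add: W_def)
  obtain U V where UV: "openin KT U" "openin KT V" "x \<in> U" "y \<in> V"
      "KT closure_of U \<inter> KT closure_of V \<subseteq> KT closure_of W"
    using Th oW zW unfolding Th_def by blast
  have "KT closure_of (f ` U) \<inter> KT closure_of (f ` V) \<subseteq> f ` (KT closure_of W)"
    by (rule hm_cl_int[OF hf UV(1,2,5)])
  also have "f ` (KT closure_of W) = KT closure_of (f ` W)"
    using homeomorphic_map_closure_of[OF hf openin_subset[OF oW]] by simp
  also have "\<dots> \<subseteq> KT closure_of W'"
    by (rule closure_of_mono) (auto simp: W_def)
  finally have "KT closure_of (f ` U) \<inter> KT closure_of (f ` V) \<subseteq> KT closure_of W'" .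
  moreover have "openin KT (f ` U)" "openin KT (f ` V)" using hm_open[OF hf] UV(1,2) by auto
  moreover have "f x \<in> f ` U" "f y \<in> f ` V" using UV(3,4) by auto
  ultimately show "\<exists>U V. openin KT U \<and> openin KT V \<and> f x \<in> U \<and> f y \<in> V \<and>
        KT closure_of U \<inter> KT closure_of V \<subseteq> KT closure_of W'" by blast
qed

lemma ND_pres:
  assumes hf: "homeomorphic_map KT KT f" and "\<not> ND F"
  shows "\<not> ND (f ` F)"
proof -
  obtain Og where "openin KT Og" "Og \<noteq> {}" "Og \<subseteq> F" using assms(2) unfolding ND_def by blast
  hence "openin KT (f ` Og)" "f ` Og \<noteq> {}" "f ` Og \<subseteq> f ` F" using hm_open[OF hf] by auto
  thus ?thesis unfolding ND_def by blast
qed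

definition Good :: "nat set \<Rightarrow> nat \<Rightarrow> bool" where
  "Good F k \<longleftrightarrow> (\<exists>U. (\<forall>i<k. openin KT (U i) \<and> U i \<noteq> {}) \<and>
     (\<forall>i<k. \<forall>j<k. i \<noteq> j \<longrightarrow> KT closure_of (U i) \<inter> KT closure_of (U j) \<subseteq> F))"

lemma Good_pres:
  assumes hf: "homeomorphic_map KT KT f" and G: "Good F k"
  shows "Good (f ` F) k"
proof -
  obtain U where U: "\<forall>i<k. openin KT (U i) \<and> U i \<noteq> {}"
    "\<forall>i<k. \<forall>j<k. i \<noteq> j \<longrightarrow> KT closure_of (U i) \<inter> KT closure_of (U j) \<subseteq> F"
    using G unfolding Good_def by blast
  have "openin KT (f ` U i) \<and> f ` U i \<noteq> {}" if "i < k" for i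
    using hm_open[OF hf, of "U i"] U(1) that by auto
  hence "\<forall>i<k. openin KT (f ` U i) \<and> f ` U i \<noteq> {}" by blast
  moreover have "KT closure_of (f ` U i) \<inter> KT closure_of (f ` U j) \<subseteq> f ` F"
    if "i < k" "j < k" "i \<noteq> j" for i j
  proof -
    have o1: "openin KT (U i)" "openin KT (U j)" using U(1) that by auto
    have s1: "KT closure_of (U i) \<inter> KT closure_of (U j) \<subseteq> F" using U(2) that by blast
    show ?thesis by (rule hm_cl_int[OF hf o1 s1])
  qed
  hence "\<forall>i<k. \<forall>j<k. i \<noteq> j \<longrightarrow> KT closure_of (f ` U i) \<inter> KT closure_of (f ` U j) \<subseteq> f ` F"
    by blast
  ultimately show ?thesis unfolding Good_def by (intro exI[of _ "\<lambda>i. f ` U i"]) blast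
qed

lemma Good_PN:
  assumes p: "prime p"
  shows "Good (PN p) (p - 1)"
proof -
  define U where "U i = {w. 1 \<le> w \<and> [w = Suc i] (mod p)}" for i
  have A1: "openin KT (U i) \<and> U i \<noteq> {}" if "i < p - 1" for i
  proof
    have "\<not> p dvd Suc i"
    proof
      assume "p dvd Suc i"
      hence "p \<le> Suc i" by (simp add: dvd_imp_le)
      thus False using that by simp
    qed
    thus "openin KT (U i)" unfolding U_def by (rule openin_class[OF p])
    have "Suc i \<in> U i" by (simp add: U_def)
    thus "U i \<noteq> {}" by blast
  qed
  have A2: "KT closure_of (U i) \<inter> KT closure_of (U j) \<subseteq> PN p"
    if ij: "i < p - 1" "j < p - 1" "i \<noteq> j" for i j
  proof
    fix w assume w: "w \<in> KT closure_of (U i) \<inter> KT closure_of (U j)"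
    have ci: "KT closure_of (U i) \<subseteq> {w. 1 \<le> w \<and> (p dvd w \<or> [w = Suc i] (mod p))}"
      by (rule clo_upper[OF p]) (auto simp: U_def)
    have cj: "KT closure_of (U j) \<subseteq> {w. 1 \<le> w \<and> (p dvd w \<or> [w = Suc j] (mod p))}"
      by (rule clo_upper[OF p]) (auto simp: U_def)
    have w1: "1 \<le> w" using w ci by blast
    have "\<not> ([w = Suc i] (mod p) \<and> [w = Suc j] (mod p))"
    proof
      assume a: "[w = Suc i] (mod p) \<and> [w = Suc j] (mod p)"
      have "[Suc i = Suc j] (mod p)" using cong_trans[OF cong_sym[OF conjunct1[OF a]] conjunct2[OF a]] .
      hence "Suc i mod p = Suc j mod p" by (simp add: cong_def)
      moreover have "Suc i < p" "Suc j < p" using ij by auto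
      ultimately have "Suc i = Suc j" by simp
      thus False using ij by simp
    qed
    hence "p dvd w" using w ci cj by blast
    thus "w \<in> PN p" using w1 by (simp add: PN_def)
  qed
  show ?thesis unfolding Good_def
    by (rule exI[of _ U]) (use A1 A2 in blast)
qed

lemma Good_PN_le:
  assumes p: "prime p" and G: "Good (PN p) k"
  shows "k \<le> p - 1"
proof (cases "k \<le> 1")
  case True
  thus ?thesis using prime_ge_2_nat[OF p] by linarith
next
  case False
  obtain U where U: "\<forall>i<k. openin KT (U i) \<and> U i \<noteq> {}"
    "\<forall>i<k. \<forall>j<k. i \<noteq> j \<longrightarrow> KT closure_of (U i) \<inter> KT closure_of (U j) \<subseteq> PN p"
    using G unfolding Good_def by blast
  define x where "x i = (SOME w. w \<in> U i)" for i
  have xU: "x i \<in> U i" if "i < k" for i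
  proof -
    have "U i \<noteq> {}" using U(1) that by blast
    then obtain w where "w \<in> U i" by blast
    thus ?thesis unfolding x_def by (rule someI)
  qed
  have sepij: "\<not> p dvd x i \<and> \<not> [x i = x j] (mod p)" if "i < k" "j < k" "i \<noteq> j" for i j
  proof -
    have o1: "openin KT (U i)" "openin KT (U j)" using U(1) that by auto
    have s1: "KT closure_of (U i) \<inter> KT closure_of (U j) \<subseteq> PN p" using U(2) that by blast
    show ?thesis by (rule sep[OF p o1 xU[OF that(1)] xU[OF that(2)] s1])
  qed
  have ndv: "\<not> p dvd x i" if "i < k" for i
  proof -
    define j :: nat where "j = (if i = 0 then 1 else 0)"
    have "j < k" "i \<noteq> j" using False that by (auto simp: j_def)
    thus ?thesis using sepij[OF that] by blast
  qed
  define g where "g i = x i mod p" for i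
  have "inj_on g {..<k}"
  proof (rule inj_onI)
    fix i j assume ij: "i \<in> {..<k}" "j \<in> {..<k}" "g i = g j"
    show "i = j"
    proof (rule ccontr)
      assume "i \<noteq> j"
      hence "\<not> [x i = x j] (mod p)" using sepij ij by auto
      thus False using ij(3) by (simp add: g_def cong_def)
    qed
  qed
  moreover have "g ` {..<k} \<subseteq> {1..p - 1}"
  proof
    fix v assume "v \<in> g ` {..<k}"
    then obtain i where i: "i < k" "v = x i mod p" by (auto simp: g_def)
    have "v \<noteq> 0" using ndv[OF i(1)] i(2) by (simp add: dvd_eq_mod_eq_0)
    moreover have "v < p" using i(2) prime_gt_0_nat[OF p] by simp
    ultimately show "v \<in> {1..p - 1}" by simp
  qed
  ultimately have "card {..<k} \<le> card {1..p - 1}" by (intro card_inj_on_le) auto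
  thus ?thesis by simp
qed

lemma ZT_eq:
  assumes "1 \<le> x" "1 \<le> y"
  shows "{z \<in> topspace KT. Th x y z} = Zs x y"
  using Th_iff[OF assms] by (auto simp: topspace_KT Zs_def)

locale hpair =
  fixes f g :: "nat \<Rightarrow> nat"
  assumes hf: "homeomorphic_map KT KT f" and hg: "homeomorphic_map KT KT g"
    and fg: "\<And>x. x \<in> topspace KT \<Longrightarrow> g (f x) = x"
    and gf: "\<And>y. y \<in> topspace KT \<Longrightarrow> f (g y) = y"
begin

lemma img_ZT:
  assumes "x \<in> topspace KT" "y \<in> topspace KT"
  shows "f ` {z \<in> topspace KT. Th x y z} = {z \<in> topspace KT. Th (f x) (f y) z}"
proof
  show "f ` {z \<in> topspace KT. Th x y z} \<subseteq> {z \<in> topspace KT. Th (f x) (f y) z}"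
    using Th_pres[OF hf] hm_ts[OF hf] by blast
  show "{z \<in> topspace KT. Th (f x) (f y) z} \<subseteq> f ` {z \<in> topspace KT. Th x y z}"
  proof
    fix z assume z: "z \<in> {z \<in> topspace KT. Th (f x) (f y) z}"
    hence "Th (g (f x)) (g (f y)) (g z)" using Th_pres[OF hg] by blast
    hence "Th x y (g z)" using fg assms by simp
    moreover have "g z \<in> topspace KT" using hm_ts[OF hg] z by blast
    moreover have "f (g z) = z" using gf z by blast
    ultimately show "z \<in> f ` {z \<in> topspace KT. Th x y z}" by (metis (mono_tags, lifting) image_eqI mem_Collect_eq)
  qed
qed

lemma gf_img: "A \<subseteq> topspace KT \<Longrightarrow> g ` (f ` A) = A"
  using fg by (force simp: image_image)

lemma fg_img: "A \<subseteq> topspace KT \<Longrightarrow> f ` (g ` A) = A"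
  using gf by (force simp: image_image)

lemma PN_ts: "PN p \<subseteq> topspace KT"
  by (auto simp: PN_def topspace_KT)

lemma PN_img:
  assumes p: "prime p" "odd p"
  shows "\<exists>q. prime q \<and> odd q \<and> f ` PN p \<subseteq> PN q"
proof -
  have p1: "1 \<le> p" "1 \<le> 2 * p" using prime_gt_0_nat[OF p(1)] by auto
  have pts: "p \<in> topspace KT" "2 * p \<in> topspace KT" using p1 by (auto simp: topspace_KT)
  have "PN p = {z \<in> topspace KT. Th p (2 * p) z}" using Zs_PN[OF p] ZT_eq[OF p1] by simp
  hence eq: "f ` PN p = Zs (f p) (f (2 * p))"
    using img_ZT[OF pts] ZT_eq hm_ts[OF hf pts(1)] hm_ts[OF hf pts(2)] by (simp add: topspace_KT)
  have nd: "ND (f ` PN p)"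
  proof (rule ccontr)
    assume "\<not> ND (f ` PN p)"
    hence "\<not> ND (g ` (f ` PN p))" by (rule ND_pres[OF hg])
    thus False using gf_img[OF PN_ts] ND_PN[OF p(1)] by simp
  qed
  have ne: "f p \<noteq> f (2 * p)"
  proof
    assume "f p = f (2 * p)"
    hence "g (f p) = g (f (2 * p))" by simp
    hence "p = 2 * p" using fg pts by simp
    thus False using p1 by simp
  qed
  have "1 \<le> f p" "1 \<le> f (2 * p)" using hm_ts[OF hf pts(1)] hm_ts[OF hf pts(2)] by (auto simp: topspace_KT)
  thus ?thesis using Zs_ND_sub[OF _ _ ne] nd eq by simp
qed

end

lemma hpair_sym: "hpair f g \<Longrightarrow> hpair g f"
  unfolding hpair_def by blast

context hpair
begin

lemma PN_fix:
  assumes p: "prime p" "odd p"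
  shows "f ` PN p = PN p"
proof -
  obtain q where q: "prime q" "odd q" "f ` PN p \<subseteq> PN q" using PN_img[OF p] by blast
  obtain r where r: "prime r" "odd r" "g ` PN q \<subseteq> PN r"
    using hpair.PN_img[OF hpair_sym[OF hpair_axioms] q(1,2)] by blast
  have "PN p = g ` (f ` PN p)" using gf_img[OF PN_ts] by simp
  also have "\<dots> \<subseteq> g ` PN q" using q(3) by blast
  finally have "PN p \<subseteq> g ` PN q" .
  hence "PN p \<subseteq> PN r" using r(3) by blast
  moreover have "p \<in> PN p" using prime_gt_0_nat[OF p(1)] by (simp add: PN_def)
  ultimately have "r dvd p" by (auto simp: PN_def)
  hence "r = p" using primes_dvd_imp_eq[OF r(1) p(1)] by simp
  hence "g ` PN q \<subseteq> PN p" using r(3) by simp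
  hence "f ` (g ` PN q) \<subseteq> f ` PN p" by blast
  hence "PN q \<subseteq> f ` PN p" using fg_img[OF PN_ts] by simp
  hence eq: "f ` PN p = PN q" using q(3) by blast
  have "Good (PN q) (p - 1)" using Good_pres[OF hf Good_PN[OF p(1)]] eq by simp
  hence le1: "p - 1 \<le> q - 1" by (rule Good_PN_le[OF q(1)])
  have "Good (g ` PN q) (q - 1)" using Good_pres[OF hg Good_PN[OF q(1)]] .
  moreover have "g ` PN q = PN p" using eq gf_img[OF PN_ts] by metis
  ultimately have "Good (PN p) (q - 1)" by simp
  hence le2: "q - 1 \<le> p - 1" by (rule Good_PN_le[OF p(1)])
  have "p = q" using le1 le2 prime_gt_0_nat[OF p(1)] prime_gt_0_nat[OF q(1)] by linarith
  thus ?thesis using eq by simp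
qed

lemma notin_PN:
  assumes p: "prime p" "odd p" and y: "y \<in> topspace KT" "\<not> p dvd y"
  shows "\<not> p dvd f y"
proof
  assume "p dvd f y"
  moreover have "f y \<in> topspace KT" using hm_ts[OF hf y(1)] .
  ultimately have "f y \<in> PN p" by (simp add: PN_def topspace_KT)
  hence "g (f y) \<in> g ` PN p" by blast
  hence "y \<in> g ` PN p" using fg y(1) by simp
  also have "g ` PN p = PN p" using PN_fix[OF p] gf_img[OF PN_ts] by metis
  finally show False using y(2) by (simp add: PN_def)
qed

lemma in_PN:
  assumes p: "prime p" "odd p" and y: "y \<in> topspace KT" "p dvd y"
  shows "p dvd f y"
proof -
  have "y \<in> PN p" using y by (simp add: PN_def topspace_KT)
  hence "f y \<in> PN p" using PN_fix[OF p] by blast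
  thus ?thesis by (simp add: PN_def)
qed

lemma ncong_pres:
  assumes p: "prime p" "odd p" and xy: "x \<in> topspace KT" "y \<in> topspace KT"
    and nc: "\<not> [x = y] (mod p)"
  shows "\<not> [f x = f y] (mod p)"
proof (cases "p dvd x")
  case True
  hence "\<not> p dvd y" using nc by (simp add: cong_def dvd_eq_mod_eq_0)
  hence "\<not> p dvd f y" using notin_PN[OF p xy(2)] by blast
  moreover have "p dvd f x" using in_PN[OF p xy(1) True] .
  ultimately show ?thesis using cong_dvd_iff by blast
next
  case nx: False
  show ?thesis
  proof (cases "p dvd y")
    case True
    hence "p dvd f y" using in_PN[OF p xy(2)] by blast
    moreover have "\<not> p dvd f x" using notin_PN[OF p xy(1) nx] .
    ultimately show ?thesis using cong_dvd_iff by blast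
  next
    case ny: False
    define U where "U = {w. 1 \<le> w \<and> [w = x] (mod p)}"
    define V where "V = {w. 1 \<le> w \<and> [w = y] (mod p)}"
    have oU: "openin KT U" unfolding U_def by (rule openin_class[OF p(1) nx])
    have oV: "openin KT V" unfolding V_def by (rule openin_class[OF p(1) ny])
    have cU: "KT closure_of U \<subseteq> {w. 1 \<le> w \<and> (p dvd w \<or> [w = x] (mod p))}"
      by (rule clo_upper[OF p(1)]) (auto simp: U_def)
    have cV: "KT closure_of V \<subseteq> {w. 1 \<le> w \<and> (p dvd w \<or> [w = y] (mod p))}"
      by (rule clo_upper[OF p(1)]) (auto simp: V_def)
    have sub: "KT closure_of U \<inter> KT closure_of V \<subseteq> PN p"
    proof
      fix w assume w: "w \<in> KT closure_of U \<inter> KT closure_of V"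
      have "\<not> ([w = x] (mod p) \<and> [w = y] (mod p))"
      proof
        assume a: "[w = x] (mod p) \<and> [w = y] (mod p)"
        have "[x = y] (mod p)" using cong_trans[OF cong_sym[OF conjunct1[OF a]] conjunct2[OF a]] .
        thus False using nc by simp
      qed
      thus "w \<in> PN p" using w cU cV by (auto simp: PN_def)
    qed
    have "KT closure_of (f ` U) \<inter> KT closure_of (f ` V) \<subseteq> f ` PN p"
      by (rule hm_cl_int[OF hf oU oV sub])
    hence sub': "KT closure_of (f ` U) \<inter> KT closure_of (f ` V) \<subseteq> PN p" using PN_fix[OF p] by simp
    have "x \<in> U" "y \<in> V" using xy by (auto simp: U_def V_def topspace_KT)
    hence "f x \<in> f ` U" "f y \<in> f ` V" by auto
    thus ?thesis using sep[OF p(1) hm_open[OF hf oU] hm_open[OF hf oV] _ _ sub'] by blast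
  qed
qed

end

definition EE :: "nat \<Rightarrow> nat \<Rightarrow> bool" where
  "EE x y \<longleftrightarrow> (\<exists>p. prime p \<and> odd p \<and> [x = y] (mod p))"

definition nop :: "nat \<Rightarrow> bool" where
  "nop n \<longleftrightarrow> (\<forall>p. prime p \<longrightarrow> odd p \<longrightarrow> \<not> p dvd n)"

lemma nop_pow2:
  fixes n :: nat
  shows "1 \<le> n \<Longrightarrow> nop n \<Longrightarrow> \<exists>k. n = 2 ^ k"
proof (induction n rule: less_induct)
  case (less n)
  show ?case
  proof (cases "n = 1")
    case True
    thus ?thesis by (intro exI[of _ 0]) simp
  next
    case False
    then obtain p where p: "prime p" "p dvd n" using prime_factor_nat by blast
    have "\<not> odd p" using less.prems(2) p unfolding nop_def by blast
    hence "2 dvd p" by simp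
    hence "p = 2" using primes_dvd_imp_eq[OF two_is_prime_nat p(1)] by simp
    then obtain m where m: "n = 2 * m" using p(2) by (auto elim: dvdE)
    have "1 \<le> m" "m < n" using m less.prems(1) by auto
    moreover have "nop m" using less.prems(2) m unfolding nop_def by (metis dvd_mult)
    ultimately obtain k where "m = 2 ^ k" using less.IH by blast
    hence "n = 2 ^ Suc k" using m by simp
    thus ?thesis by blast
  qed
qed

lemma noE_diff:
  assumes "x < y" "\<not> EE x y"
  shows "\<exists>k. y - x = 2 ^ k"
proof -
  have "nop (y - x)" unfolding nop_def
  proof (intro allI impI notI)
    fix p :: nat assume p: "prime p" "odd p" "p dvd y - x"
    then obtain k where "y - x = p * k" by (auto elim: dvdE)
    have "y = (y - x) + x" using assms(1) by simp
    also have "\<dots> = k * p + x" using \<open>y - x = p * k\<close> by (simp add: mult.commute)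
    finally have "y = k * p + x" .
    hence "[y = x] (mod p)" using cong_le_nat[of x y p] assms(1) by auto
    hence "[x = y] (mod p)" by (rule cong_sym)
    thus False using assms(2) p unfolding EE_def by blast
  qed
  thus ?thesis using nop_pow2 assms(1) by simp
qed

lemma pow2_noE:
  assumes "x < y" "y - x = 2 ^ k"
  shows "\<not> EE x y"
proof
  assume "EE x y"
  then obtain p where p: "prime p" "odd p" "[x = y] (mod p)" unfolding EE_def by blast
  have "[y = x] (mod p)" using p(3) by (rule cong_sym)
  then obtain q where "y = q * p + x" using cong_le_nat[of x y p] assms(1) by auto
  hence "p dvd y - x" by simp
  hence "p dvd 2 ^ k" using assms(2) by simp
  hence "p dvd 2" using prime_dvd_power[OF p(1)] by blast
  hence "p = 2" using primes_dvd_imp_eq[OF p(1) two_is_prime_nat] by simp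
  thus False using p(2) by simp
qed

lemma EE_sym: "EE x y \<longleftrightarrow> EE y x"
  unfolding EE_def by (auto simp: cong_sym_eq)

lemma one_two:
  assumes "1 \<le> w" "nop w" "w \<noteq> 1" "\<not> EE 1 w"
  shows "w = 2"
proof -
  obtain c where c: "w = 2 ^ c" using nop_pow2 assms(1,2) by blast
  have "c \<noteq> 0" using c assms(3) by auto
  hence "1 < w" using c one_less_power[of "2::nat" c] by simp
  then obtain s where s: "w - 1 = 2 ^ s" using noE_diff assms(4) by blast
  have "even w" using c \<open>c \<noteq> 0\<close> by simp
  hence "odd (w - 1)" using \<open>1 < w\<close> by simp
  hence o2: "odd ((2::nat) ^ s)" unfolding s .
  show "w = 2"
  proof (cases s)
    case 0 thus ?thesis using s \<open>1 < w\<close> by simp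
  next
    case (Suc n) thus ?thesis using o2 by simp
  qed
qed

context hpair
begin

lemma EE_pres:
  assumes "x \<in> topspace KT" "y \<in> topspace KT" "\<not> EE x y"
  shows "\<not> EE (f x) (f y)"
  using ncong_pres assms unfolding EE_def by blast

lemma nop_pres:
  assumes "x \<in> topspace KT" "nop x"
  shows "nop (f x)"
  using notin_PN assms unfolding nop_def by blast

end

lemma pow2_ts: "(2::nat) ^ k \<in> topspace KT"
  by (simp add: topspace_KT)

context hpair
begin

lemma f_one: "f 1 = 1"
proof -
  have ts1: "(1::nat) \<in> topspace KT" by (simp add: topspace_KT)
  have "nop (1::nat)" unfolding nop_def
  proof (intro allI impI notI)
    fix p :: nat assume "prime p" "odd p" "p dvd 1"
    hence "p = 1" by simp
    thus False using \<open>prime p\<close> by simp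
  qed
  hence "nop (f 1)" using nop_pres ts1 by blast
  moreover have "1 \<le> f 1" using hm_ts[OF hf ts1] by (simp add: topspace_KT)
  ultimately obtain a where a: "f 1 = 2 ^ a" using nop_pow2 by blast
  show ?thesis
  proof (cases a)
    case 0 thus ?thesis using a by simp
  next
    case (Suc b)
    have g1: "g (2 ^ a) = 1" using fg ts1 a by metis
    have gnop: "nop (g ((2::nat) ^ k))" for k
    proof -
      have "nop ((2::nat) ^ k)" unfolding nop_def
      proof (intro allI impI notI)
        fix p :: nat assume p: "prime p" "odd p" "p dvd 2 ^ k"
        hence "p dvd 2" using prime_dvd_power by blast
        hence "p = 2" using primes_dvd_imp_eq[OF p(1) two_is_prime_nat] by simp
        thus False using p(2) by simp
      qed
      thus ?thesis using hpair.nop_pres[OF hpair_sym[OF hpair_axioms] pow2_ts] by blast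
    qed
    have gts: "1 \<le> g ((2::nat) ^ k)" for k
      using hm_ts[OF hg pow2_ts] by (simp add: topspace_KT)
    have u2: "g (2 ^ b) = 2"
    proof (rule one_two[OF gts gnop])
      show "g (2 ^ b) \<noteq> 1"
      proof
        assume "g (2 ^ b) = 1"
        hence "f (g (2 ^ b)) = f (g (2 ^ a))" using g1 by simp
        hence "(2::nat) ^ b = 2 ^ a" using gf pow2_ts by metis
        thus False using Suc by simp
      qed
      have "\<not> EE ((2::nat) ^ b) (2 ^ a)" using Suc by (intro pow2_noE) auto
      hence "\<not> EE (g (2 ^ b)) (g (2 ^ a))" using hpair.EE_pres[OF hpair_sym[OF hpair_axioms] pow2_ts pow2_ts] by blast
      thus "\<not> EE 1 (g (2 ^ b))" using g1 EE_sym by metis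
    qed
    have v2: "g (2 ^ Suc a) = 2"
    proof (rule one_two[OF gts gnop])
      show "g (2 ^ Suc a) \<noteq> 1"
      proof
        assume "g (2 ^ Suc a) = 1"
        hence "f (g (2 ^ Suc a)) = f (g (2 ^ a))" using g1 by simp
        hence "(2::nat) ^ Suc a = 2 ^ a" using gf pow2_ts by metis
        thus False by simp
      qed
      have "\<not> EE ((2::nat) ^ a) (2 ^ Suc a)" by (intro pow2_noE) auto
      hence "\<not> EE (g (2 ^ a)) (g (2 ^ Suc a))" using hpair.EE_pres[OF hpair_sym[OF hpair_axioms] pow2_ts pow2_ts] by blast
      thus "\<not> EE 1 (g (2 ^ Suc a))" using g1 by simp
    qed
    have "f (g (2 ^ b)) = f (g (2 ^ Suc a))" using u2 v2 by simp
    hence "(2::nat) ^ b = 2 ^ Suc a" using gf pow2_ts by metis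
    thus ?thesis using Suc by simp
  qed
qed

lemma f_two: "f 2 = 2"
proof -
  have ts1: "(1::nat) \<in> topspace KT" and ts2: "(2::nat) \<in> topspace KT" by (simp_all add: topspace_KT)
  have "nop (2::nat)" unfolding nop_def
  proof (intro allI impI notI)
    fix p :: nat assume p: "prime p" "odd p" "p dvd 2"
    hence "p = 2" using primes_dvd_imp_eq[OF p(1) two_is_prime_nat] by simp
    thus False using p(2) by simp
  qed
  hence "nop (f 2)" using nop_pres ts2 by blast
  moreover have "1 \<le> f 2" using hm_ts[OF hf ts2] by (simp add: topspace_KT)
  moreover have "f 2 \<noteq> 1"
  proof
    assume "f 2 = 1"
    hence "g (f 2) = g (f 1)" using f_one by simp
    thus False using fg ts1 ts2 by simp
  qed
  moreover have "\<not> EE 1 (f 2)"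
  proof -
    have "\<not> EE (1::nat) 2" by (rule pow2_noE[of _ _ 0]) auto
    hence "\<not> EE (f 1) (f 2)" using EE_pres ts1 ts2 by blast
    thus ?thesis using f_one by simp
  qed
  ultimately show ?thesis using one_two by blast
qed

lemma f_id: "1 \<le> x \<Longrightarrow> f x = x"
proof (induction x rule: less_induct)
  case (less x)
  show ?case
  proof (cases "x \<le> 2")
    case True
    hence "x = 1 \<or> x = 2" using less.prems by auto
    thus ?thesis using f_one f_two by auto
  next
    case False
    have xts: "x \<in> topspace KT" using less.prems by (simp add: topspace_KT)
    define X where "X = f x"
    have X1: "1 \<le> X" using hm_ts[OF hf xts] by (simp add: X_def topspace_KT)
    have "\<not> X < x"
    proof
      assume "X < x"
      hence "f X = X" using less.IH X1 by blast
      hence "g (f X) = g (f x)" by (simp add: X_def)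
      hence "X = x" using fg X1 xts by (simp add: topspace_KT)
      thus False using \<open>X < x\<close> by simp
    qed
    hence Xx: "x \<le> X" by simp
    have t1: "x - 1 \<in> topspace KT" "x - 2 \<in> topspace KT" using False by (auto simp: topspace_KT)
    have f1: "f (x - 1) = x - 1" using less.IH False by simp
    have f2: "f (x - 2) = x - 2" using less.IH False by simp
    have "\<not> EE (x - 1) x" using False by (intro pow2_noE[of _ _ 0]) auto
    hence "\<not> EE (x - 1) X" using EE_pres[OF t1(1) xts] f1 by (simp add: X_def)
    moreover have "x - 1 < X" using Xx False by simp
    ultimately obtain s where s: "X - (x - 1) = 2 ^ s" using noE_diff by blast
    have "\<not> EE (x - 2) x" using False by (intro pow2_noE[of _ _ 1]) auto
    hence "\<not> EE (x - 2) X" using EE_pres[OF t1(2) xts] f2 by (simp add: X_def)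
    moreover have "x - 2 < X" using Xx False by simp
    ultimately obtain t where t: "X - (x - 2) = 2 ^ t" using noE_diff by blast
    have st: "2 ^ t = 2 ^ s + (1::nat)" using s t Xx False by simp
    have "s = 0"
    proof (rule ccontr)
      assume "s \<noteq> 0"
      hence "even ((2::nat) ^ s)" by simp
      hence "odd ((2::nat) ^ t)" using st by simp
      hence "t = 0" by (cases t) auto
      thus False using st by simp
    qed
    hence "X - (x - 1) = 1" using s by simp
    hence "X = x" using Xx False by arith
    thus ?thesis by (simp add: X_def)
  qed
qed

end

theorem theorem0p1:
  fixes h :: "nat \<Rightarrow> nat"
  assumes "homeomorphic_map kirch_topology kirch_topology h"
  shows "\<forall>x\<in>topspace kirch_topology. h x = x"
proof -
  obtain g where "homeomorphic_maps KT KT h g" using assms homeomorphic_map_maps by blast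
  hence "hpair h g" unfolding hpair_def homeomorphic_maps_map by blast
  thus ?thesis using hpair.f_id by (auto simp: topspace_KT)
qed

end
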